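(* Let $\Lambda,\delta>0$ and $0<s<1$. The function $\bar u$ (defined in the context) satisfies $$\int_{-\delta}^0(-\Delta)^s\bar u(x)\,dx=0.$$
   Context: $\bar u:\mathbb R\to\mathbb R$ is the $(\Lambda+1)\delta$-periodic function defined on $(-\delta,\Lambda\delta]$ by $\bar u(x)=-\Lambda x$ for $-\delta<x<0$ and $\bar u(x)=x$ for $0\le x\le\Lambda\delta$. For $0<s<1$, the fractional Laplacian, defined at every point where $\bar u'$ does not jump, is $$(-\Delta)^s \bar u(x):=2\lim_{r\to0^+}\int_{\mathbb R\setminus(x-r,x+r)}\frac{\bar u(x)-\bar u(y)}{|x-y|^{1+2s}}\,dy .$$ *)

theory Defs
  imports "HOL-Analysis.Analysis"
begin

text \<open>The ((Lambda+1)*delta)-periodic sawtooth function: on (-delta, Lambda*delta]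
  it equals -Lambda*x for x<0 and x for x>=0.  The reduction y of x into
  (-delta, Lambda*delta] is y = x - p*ceiling((x - Lambda*delta)/p), p the period.\<close>
definition ubar :: "real \<Rightarrow> real \<Rightarrow> real \<Rightarrow> real" where
  "ubar \<Lambda> \<delta> x =
     (let p = (\<Lambda> + 1) * \<delta>;
          y = x - p * of_int \<lceil>(x - \<Lambda> * \<delta>) / p\<rceil>
      in if y < 0 then - \<Lambda> * y else y)"

definition frac_lap_trunc :: "real \<Rightarrow> (real \<Rightarrow> real) \<Rightarrow> real \<Rightarrow> real \<Rightarrow> real" where
  "frac_lap_trunc s u x r =
     2 * integral (UNIV - {x - r <..< x + r}) (\<lambda>y. (u x - u y) / \<bar>x - y\<bar> powr (1 + 2 * s))"

definition frac_lap :: "real \<Rightarrow> (real \<Rightarrow> real) \<Rightarrow> real \<Rightarrow> real" where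
  "frac_lap s u x = Lim (at_right 0) (frac_lap_trunc s u x)"

end

theory Submission
  imports Defs "HOL-Analysis.Analysis"
begin

lemma ubar_red:
  fixes L d y :: real
  assumes "L > 0" "d > 0"
  defines "p \<equiv> (L+1)*d"
  shows "-d < y - p * of_int \<lceil>(y - L*d)/p\<rceil>" "y - p * of_int \<lceil>(y - L*d)/p\<rceil> \<le> L*d"
proof -
  have p: "p > 0" using assms by (simp add: p_def)
  let ?c = "(y - L*d)/p"
  have "of_int \<lceil>?c\<rceil> \<ge> ?c" by linarith
  hence "p * of_int \<lceil>?c\<rceil> \<ge> p * ?c" using p by (intro mult_left_mono) auto
  moreover have "p * ?c = y - L*d" using p by simp
  ultimately show "y - p * of_int \<lceil>?c\<rceil> \<le> L*d" by linarith
  have "of_int \<lceil>?c\<rceil> < ?c + 1" by linarith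
  hence "p * of_int \<lceil>?c\<rceil> < p * (?c+1)" using p by (intro mult_strict_left_mono) auto
  moreover have "p * (?c+1) = y - L*d + p" using p by (simp add: field_simps)
  ultimately show "-d < y - p * of_int \<lceil>?c\<rceil>" unfolding p_def by (simp add: algebra_simps)
qed

lemma ubar_range:
  assumes "L > 0" "d > 0"
  shows "0 \<le> ubar L d y" "ubar L d y \<le> L*d"
proof -
  define z where "z = y - (L+1)*d * of_int \<lceil>(y - L*d)/((L+1)*d)\<rceil>"
  have z: "-d < z" "z \<le> L*d" using ubar_red[OF assms, of y] by (simp_all add: z_def)
  have u: "ubar L d y = (if z < 0 then -L*z else z)" by (simp add: ubar_def Let_def z_def)
  have "-L*z \<le> L*d" if "z<0" using mult_left_mono[of "-z" d L] z assms that by simp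
  moreover have "0 \<le> -L*z" if "z<0" using assms that by (simp add: mult_nonneg_nonpos)
  ultimately show "0 \<le> ubar L d y" "ubar L d y \<le> L*d" using u z assms by auto
qed

lemma ubar_main:
  assumes "L > 0" "d > 0" "-d < y" "y \<le> L*d"
  shows "ubar L d y = (if y < 0 then -L*y else y)"
proof -
  have p: "(L+1)*d > 0" using assms by simp
  have "\<lceil>(y - L*d)/((L+1)*d)\<rceil> = 0"
  proof (subst ceiling_eq_iff)
    show "of_int 0 - 1 < (y - L * d) / ((L + 1) * d) \<and> (y - L * d) / ((L + 1) * d) \<le> of_int 0"
      using assms p by (auto simp: field_simps)
  qed
  thus ?thesis by (simp add: ubar_def Let_def)
qed

lemma ubar_periodic:
  assumes "L > 0" "d > 0"
  shows "ubar L d (y + of_int k * ((L+1)*d)) = ubar L d y"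
proof -
  have p: "(L+1)*d > 0" using assms by simp
  have "(y + of_int k * ((L+1)*d) - L*d)/((L+1)*d) = (y - L*d)/((L+1)*d) + of_int k"
    using p by (simp add: field_simps)
  hence "\<lceil>(y + of_int k * ((L+1)*d) - L*d)/((L+1)*d)\<rceil> = \<lceil>(y - L*d)/((L+1)*d)\<rceil> + k"
    by simp
  thus ?thesis by (simp add: ubar_def Let_def algebra_simps)
qed

lemma ubar_reflect:
  assumes L: "L > 0" and d: "d > 0"
  shows "ubar L d (-d - y) = L*d - ubar L d y"
proof -
  define p where "p = (L+1)*d"
  define k where "k = \<lceil>(y - L*d)/p\<rceil>"
  define z where "z = y - p * of_int k"
  have z1: "-d < z" "z \<le> L*d" using ubar_red[OF L d, of y] by (simp_all add: z_def k_def p_def)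
  have yz: "y = z + of_int k * p" by (simp add: z_def)
  have uy: "ubar L d y = ubar L d z" using ubar_periodic[OF L d, of z k] by (simp add: yz p_def)
  show ?thesis
  proof (cases "z < 0")
    case True
    have "ubar L d (-d - y) = ubar L d ((-d - z) + of_int (-k) * ((L+1)*d))"
      by (rule arg_cong[where f="ubar L d"]) (simp add: yz p_def algebra_simps)
    also have "\<dots> = ubar L d (-d-z)" by (rule ubar_periodic[OF L d])
    also have "\<dots> = -L*(-d-z)" using True z1 L d ubar_main[OF L d, of "-d-z"]
      by (smt (verit, best) mult_pos_pos)
    finally show ?thesis using uy ubar_main[OF L d z1] True by (simp add: algebra_simps)
  next
    case False
    have "ubar L d (-d - y) = ubar L d ((L*d - z) + of_int (-k-1) * ((L+1)*d))"
      by (rule arg_cong[where f="ubar L d"]) (simp add: yz p_def algebra_simps)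
    also have "\<dots> = ubar L d (L*d-z)" by (rule ubar_periodic[OF L d])
    also have "\<dots> = L*d-z" using False z1 L d ubar_main[OF L d, of "L*d-z"] by auto
    finally show ?thesis using uy ubar_main[OF L d z1] False by (simp add: algebra_simps)
  qed
qed

lemma ubar_lip:
  assumes L: "L > 0" and d: "d > 0" and x: "-d < x" "x \<le> 0" and y: "-d < y" "y \<le> L*d"
  shows "\<bar>ubar L d x - ubar L d y\<bar> \<le> (L+1) * \<bar>x - y\<bar>"
proof -
  have "0 < L*d" using L d by simp
  hence "x \<le> L*d" using x by linarith
  hence ux: "ubar L d x = -L*x" using ubar_main[OF L d x(1)] x by auto
  show ?thesis
  proof (cases "y < 0")
    case True
    have "ubar L d x - ubar L d y = L*(y-x)" using ux ubar_main[OF L d y] True by (simp add: algebra_simps)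
    hence "\<bar>ubar L d x - ubar L d y\<bar> = L*\<bar>x-y\<bar>" using L by (simp add: abs_mult abs_minus_commute)
    also have "\<dots> \<le> (L+1) * \<bar>x - y\<bar>" by (intro mult_right_mono) auto
    finally show ?thesis .
  next
    case False
    have uy: "ubar L d y = y" using ubar_main[OF L d y] False by simp
    have a: "L*y \<ge> 0" "L*x \<le> 0" using L False x by (auto simp: mult_nonneg_nonpos)
    have "\<bar>x-y\<bar> = y - x" using False x by auto
    moreover have "\<bar>-L*x - y\<bar> \<le> (L+1)*(y-x)" using a x False by (simp add: algebra_simps abs_le_iff)
    ultimately show ?thesis using ux uy by simp
  qed
qed

lemma ubar_measurable[measurable]: "ubar L d \<in> borel_measurable borel"
  unfolding ubar_def Let_def by measurable

lemma hk_nonneg_lborel: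
  fixes f :: "real \<Rightarrow> real"
  assumes [measurable]: "f \<in> borel_measurable borel" and nn: "\<And>t. 0 \<le> f t" and i: "f integrable_on UNIV"
  shows "integrable lborel f"
proof -
  obtain I where I: "(f has_integral I) UNIV" using i by (auto simp: integrable_on_def)
  have "integral\<^sup>N lborel f = ennreal I" using nn_integral_has_integral_lborel[OF _ nn I] by simp
  thus ?thesis by (intro integrableI_nn_integral_finite[where x=I]) (auto simp: nn)
qed

lemma int_powr_0c:
  fixes b c :: real
  assumes "b > -1" "c \<ge> 0"
  shows "integrable lborel (\<lambda>t. indicator {0..c} t * t powr b)"
proof (rule hk_nonneg_lborel)
  show "(\<lambda>t. indicator {0..c} t * t powr b) \<in> borel_measurable borel" by measurable
  show "0 \<le> indicator {0..c} t * t powr b" for t by (simp add: indicator_def)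
  have "(\<lambda>t. if t \<in> {0..c} then t powr b else 0) integrable_on UNIV"
    using integrable_on_powr_from_0[OF assms] by (subst integrable_restrict_UNIV)
  moreover have "(\<lambda>t. if t \<in> {0..c} then t powr b else 0) = (\<lambda>t. indicator {0..c} t * t powr b)"
    by (auto simp: indicator_def)
  ultimately show "(\<lambda>t. indicator {0..c} t * t powr b) integrable_on UNIV" by simp
qed

lemma int_powr_rinf:
  fixes e r :: real
  assumes "e < -1" "r > 0"
  shows "integrable lborel (\<lambda>t. indicator {r..} t * t powr e)"
proof (rule hk_nonneg_lborel)
  show "(\<lambda>t. indicator {r..} t * t powr e) \<in> borel_measurable borel" by measurable
  show "0 \<le> indicator {r..} t * t powr e" for t by (simp add: indicator_def)
  have "(\<lambda>t. if t \<in> {r..} then t powr e else 0) integrable_on UNIV"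
    using has_integral_powr_to_inf[OF assms] by (subst integrable_restrict_UNIV) (auto simp: integrable_on_def)
  moreover have "(\<lambda>t. if t \<in> {r..} then t powr e else 0) = (\<lambda>t. indicator {r..} t * t powr e)"
    by (auto simp: indicator_def)
  ultimately show "(\<lambda>t. indicator {r..} t * t powr e) integrable_on UNIV" by simp
qed

lemma int_sym:
  fixes g :: "real \<Rightarrow> real"
  assumes "integrable lborel g"
  shows "integrable lborel (\<lambda>t. g t + g (-t))"
proof -
  have "integrable lborel (\<lambda>t. g (0 + (-1) * t))"
    by (rule lborel_integrable_real_affine[OF assms]) simp
  thus ?thesis using assms by simp
qed

lemma int_abs_powr_near:
  fixes b c :: real
  assumes "b > -1" "c \<ge> 0"
  shows "integrable lborel (\<lambda>t. indicator {-c..c} t * \<bar>t\<bar> powr b)"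
proof -
  have "integrable lborel (\<lambda>t. indicator {0..c} t * t powr b + indicator {0..c} (-t) * (-t) powr b)"
    using int_sym[OF int_powr_0c[OF assms]] by simp
  moreover have "(\<lambda>t. indicator {0..c} t * t powr b + indicator {0..c} (-t) * (-t) powr b)
     = (\<lambda>t. indicator {-c..c} t * \<bar>t\<bar> powr b)"
    by (auto simp: indicator_def fun_eq_iff)
  ultimately show ?thesis by simp
qed

lemma int_abs_powr_far:
  fixes e r :: real
  assumes "e < -1" "r > 0"
  shows "integrable lborel (\<lambda>t. indicator {t. r \<le> \<bar>t\<bar>} t * \<bar>t\<bar> powr e)"
proof -
  have "integrable lborel (\<lambda>t. indicator {r..} t * t powr e + indicator {r..} (-t) * (-t) powr e)"
    using int_sym[OF int_powr_rinf[OF assms]] by simp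
  moreover have "(\<lambda>t. indicator {r..} t * t powr e + indicator {r..} (-t) * (-t) powr e)
     = (\<lambda>t. indicator {t. r \<le> \<bar>t\<bar>} t * \<bar>t\<bar> powr e)"
    using assms by (auto simp: indicator_def fun_eq_iff)
  ultimately show ?thesis by simp
qed

lemma int_translate:
  fixes g :: "real \<Rightarrow> real"
  assumes "integrable lborel g"
  shows "integrable lborel (\<lambda>y. g (y - x))" "(\<integral>y. g (y - x) \<partial>lborel) = (\<integral>y. g y \<partial>lborel)"
proof -
  have "integrable lborel (\<lambda>y. g (-x + 1 * y))"
    by (rule lborel_integrable_real_affine[OF assms]) simp
  thus "integrable lborel (\<lambda>y. g (y - x))" by simp
  have "(\<integral>y. g y \<partial>lborel) = \<bar>1\<bar> *\<^sub>R (\<integral>y. g (-x + 1 * y) \<partial>lborel)"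
    by (rule lborel_integral_real_affine) simp
  thus "(\<integral>y. g (y - x) \<partial>lborel) = (\<integral>y. g y \<partial>lborel)" by simp
qed

definition fk :: "real \<Rightarrow> real \<Rightarrow> real \<Rightarrow> real \<Rightarrow> real \<Rightarrow> real" where
  "fk L d s x y = (ubar L d x - ubar L d y) / \<bar>x - y\<bar> powr (1 + 2 * s)"

definition J :: "real \<Rightarrow> real \<Rightarrow> real \<Rightarrow> real \<Rightarrow> real \<Rightarrow> real" where
  "J L d s x r = (\<integral>y. indicator {y. r \<le> \<bar>y - x\<bar>} y * fk L d s x y \<partial>lborel)"

lemma fk_measurable[measurable]: "(\<lambda>y. fk L d s x y) \<in> borel_measurable borel"
  unfolding fk_def by measurable

lemma S_eq: "UNIV - {x-r<..<x+r} = {y::real. r \<le> \<bar>y - x\<bar>}"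
  by auto

lemma J_integrable:
  assumes L: "L > 0" and d: "d > 0" and s: "s > 0" and r: "r > 0"
  shows "integrable lborel (\<lambda>y. indicator {y. r \<le> \<bar>y - x\<bar>} y * fk L d s x y)"
proof (rule Bochner_Integration.integrable_bound)
  let ?g = "\<lambda>t. indicator {t. r \<le> \<bar>t\<bar>} t * \<bar>t\<bar> powr (-(1+2 * s))"
  have "integrable lborel ?g" using int_abs_powr_far[of "-(1+2 * s)" r] s r by simp
  from int_translate(1)[OF this, of x]
  show "integrable lborel (\<lambda>y. L*d * ?g (y - x))" by (intro integrable_mult_right)
  show "(\<lambda>y. indicator {y. r \<le> \<bar>y - x\<bar>} y * fk L d s x y) \<in> borel_measurable lborel"
    by measurable
  show "AE y in lborel. norm (indicator {y. r \<le> \<bar>y - x\<bar>} y * fk L d s x y) \<le> norm (L*d * ?g (y - x))"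
  proof (rule AE_I2)
    fix y
    show "norm (indicator {y. r \<le> \<bar>y - x\<bar>} y * fk L d s x y) \<le> norm (L*d * ?g (y - x))"
    proof (cases "r \<le> \<bar>y - x\<bar>")
      case True
      have du: "\<bar>ubar L d x - ubar L d y\<bar> \<le> L*d"
        using ubar_range[OF L d, of x] ubar_range[OF L d, of y] by linarith
      have pos: "\<bar>y - x\<bar> > 0" using True r by linarith
      have "\<bar>fk L d s x y\<bar> = \<bar>ubar L d x - ubar L d y\<bar> * \<bar>y - x\<bar> powr (-(1+2 * s))"
      proof -
        have e: "\<bar>y - x\<bar> powr (-(1+2 * s)) = inverse (\<bar>x - y\<bar> powr (1 + 2 * s))"
          by (simp only: powr_minus abs_minus_commute)
        show ?thesis unfolding fk_def e by (simp add: divide_inverse abs_mult)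
      qed
      also have "\<dots> \<le> L*d * \<bar>y - x\<bar> powr (-(1+2 * s))"
        by (intro mult_right_mono du) simp
      finally show ?thesis using True L d by (simp add: abs_mult)
    next
      case False
      then show ?thesis by simp
    qed
  qed
qed

lemma trunc_eq_J:
  assumes L: "L > 0" and d: "d > 0" and s: "s > 0" and r: "r > 0"
  shows "frac_lap_trunc s (ubar L d) x r = 2 * J L d s x r"
proof -
  have si: "set_integrable lborel {y. r \<le> \<bar>y - x\<bar>} (fk L d s x)"
    using J_integrable[OF assms, of x] by (simp add: set_integrable_def)
  have "integral {y. r \<le> \<bar>y - x\<bar>} (fk L d s x) = (LINT y:{y. r \<le> \<bar>y - x\<bar>}|lborel. fk L d s x y)"
    using set_borel_integral_eq_integral(2)[OF si] by simp
  also have "\<dots> = J L d s x r" by (simp add: set_lebesgue_integral_def J_def)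
  finally show ?thesis unfolding frac_lap_trunc_def S_eq fk_def[abs_def] by simp
qed

lemma J_odd:
  assumes L: "L > 0" and d: "d > 0"
  shows "J L d s (-d-x) r = - J L d s x r"
proof -
  let ?F = "\<lambda>y. indicator {y. r \<le> \<bar>y - (-d-x)\<bar>} y * fk L d s (-d-x) y"
  have "(\<integral>y. ?F y \<partial>lborel) = \<bar>-1\<bar> *\<^sub>R (\<integral>y. ?F (-d + (-1) * y) \<partial>lborel)"
    by (rule lborel_integral_real_affine) simp
  also have "(\<lambda>y. ?F (-d + (-1) * y)) = (\<lambda>y. - (indicator {y. r \<le> \<bar>y - x\<bar>} y * fk L d s x y))"
  proof
    fix y
    have i: "indicator {y. r \<le> \<bar>y - (-d-x)\<bar>} (-d + (-1) * y) = (indicator {y. r \<le> \<bar>y - x\<bar>} y :: real)"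
      by (simp add: indicator_def abs_minus_commute)
    have f: "fk L d s (-d-x) (-d + (-1) * y) = - fk L d s x y"
    proof -
      have "fk L d s (-d-x) (-d - y) = - fk L d s x y"
        unfolding fk_def ubar_reflect[OF L d]
        by (simp add: abs_minus_commute algebra_simps minus_divide_left)
      thus ?thesis by simp
    qed
    show "?F (-d + (-1) * y) = - (indicator {y. r \<le> \<bar>y - x\<bar>} y * fk L d s x y)"
      by (simp only: i f)
  qed
  finally show ?thesis by (simp add: J_def)
qed

lemma J_const:
  assumes L: "L > 0" and d: "d > 0" and s: "s > 0" and x: "-d < x" "x < 0"
    and r: "0 < r" "r \<le> min (x+d) (-x)"
  shows "J L d s x r = J L d s x (min (x+d) (-x))"
proof -
  define \<rho> where "\<rho> = min (x+d) (-x)"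
  have \<rho>: "\<rho> > 0" "r \<le> \<rho>" using x r by (auto simp: \<rho>_def)
  define A where "A = {y. r \<le> \<bar>y - x\<bar> \<and> \<bar>y - x\<bar> < \<rho>}"
  let ?G = "\<lambda>y. indicator A y * fk L d s x y"
  have ux: "\<And>y. -d < y \<Longrightarrow> y < 0 \<Longrightarrow> ubar L d y = -L*y"
  proof -
    fix y :: real assume "-d < y" "y < 0"
    moreover have "0 < L*d" using L d by simp
    ultimately show "ubar L d y = -L*y" using ubar_main[OF L d, of y] by auto
  qed
  have G: "?G (2*x + (-1)*y) = - ?G y" for y
  proof (cases "y \<in> A")
    case True
    have y: "-d < y" "y < 0" "-d < 2*x-y" "2*x-y < 0" using True x by (auto simp: A_def \<rho>_def)
    have "2*x + (-1)*y \<in> A" using True by (auto simp: A_def)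
    moreover have "fk L d s x (2*x-y) = - fk L d s x y"
      unfolding fk_def ux[OF x] ux[OF y(1,2)] ux[OF y(3,4)]
      by (simp add: abs_minus_commute algebra_simps minus_divide_left)
    ultimately show ?thesis using True by simp
  next
    case False
    have "2*x + (-1)*y \<notin> A" using False by (auto simp: A_def)
    then show ?thesis using False by simp
  qed
  have "(\<integral>y. ?G y \<partial>lborel) = \<bar>-1\<bar> *\<^sub>R (\<integral>y. ?G (2*x + (-1)*y) \<partial>lborel)"
    by (rule lborel_integral_real_affine) simp
  also have "\<dots> = - (\<integral>y. ?G y \<partial>lborel)" by (simp only: G) simp
  finally have G0: "(\<integral>y. ?G y \<partial>lborel) = 0" by simp
  have i1: "integrable lborel (\<lambda>y. indicator {y. r \<le> \<bar>y - x\<bar>} y * fk L d s x y)"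
    using J_integrable[OF L d s r(1)] .
  have i2: "integrable lborel (\<lambda>y. indicator {y. \<rho> \<le> \<bar>y - x\<bar>} y * fk L d s x y)"
    using J_integrable[OF L d s \<rho>(1)] .
  have eq: "(\<lambda>y. indicator {y. r \<le> \<bar>y - x\<bar>} y * fk L d s x y - indicator {y. \<rho> \<le> \<bar>y - x\<bar>} y * fk L d s x y)
       = ?G"
    using \<rho> by (auto simp: fun_eq_iff indicator_def A_def)
  have "J L d s x r - J L d s x \<rho> = (\<integral>y. ?G y \<partial>lborel)"
    unfolding J_def by (subst Bochner_Integration.integral_diff[OF i1 i2, symmetric]) (simp only: eq)
  with G0 show ?thesis by (simp add: \<rho>_def)
qed

lemma trunc_tendsto:
  assumes L: "L > 0" and d: "d > 0" and s: "s > 0" and x: "-d < x" "x < 0"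
  shows "(frac_lap_trunc s (ubar L d) x \<longlongrightarrow> 2 * J L d s x (min (x+d) (-x))) (at_right 0)"
proof (rule tendsto_eventually)
  have p: "min (x+d) (-x) > 0" using x by simp
  show "eventually (\<lambda>r. frac_lap_trunc s (ubar L d) x r = 2 * J L d s x (min (x+d) (-x))) (at_right 0)"
    unfolding eventually_at_right_field
  proof (intro exI conjI allI impI)
    show "(0::real) < min (x+d) (-x)" by (fact p)
    fix r :: real assume r: "0 < r" "r < min (x+d) (-x)"
    have "frac_lap_trunc s (ubar L d) x r = 2 * J L d s x r" by (rule trunc_eq_J[OF L d s r(1)])
    also have "J L d s x r = J L d s x (min (x+d) (-x))"
      by (rule J_const[OF L d s x r(1)]) (use r in linarith)
    finally show "frac_lap_trunc s (ubar L d) x r = 2 * J L d s x (min (x+d) (-x))" .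
  qed
qed

lemma frac_lap_eq:
  assumes L: "L > 0" and d: "d > 0" and s: "s > 0" and x: "-d < x" "x < 0"
  shows "frac_lap s (ubar L d) x = 2 * J L d s x (min (x+d) (-x))"
  unfolding frac_lap_def using trunc_tendsto[OF assms] by (intro tendsto_Lim) auto

lemma frac_lap_odd:
  assumes L: "L > 0" and d: "d > 0" and s: "s > 0" and x: "-d < x" "x < 0"
  shows "frac_lap s (ubar L d) (-d-x) = - frac_lap s (ubar L d) x"
proof -
  have x': "-d < -d-x" "-d-x < 0" using x by auto
  have "min ((-d-x)+d) (-(-d-x)) = min (x+d) (-x)" by (simp add: min.commute algebra_simps)
  thus ?thesis using frac_lap_eq[OF L d s x] frac_lap_eq[OF L d s x'] J_odd[OF L d, of s x] by simp
qed

definition G :: "real \<Rightarrow> real \<Rightarrow> real \<Rightarrow> real \<Rightarrow> real" where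
  "G L d s x = 2 * (\<integral>y. (if \<bar>x\<bar> \<le> \<bar>y - x\<bar> then fk L d s x y else 0) \<partial>lborel)"

lemma G_measurable: "G L d s \<in> borel_measurable lborel"
  unfolding G_def fk_def by measurable

lemma frac_lap_G:
  assumes L: "L > 0" and d: "d > 0" and s: "s > 0" and x: "-d/2 < x" "x < 0"
  shows "frac_lap s (ubar L d) x = G L d s x"
proof -
  have x': "-d < x" using x d by linarith
  have m: "min (x+d) (-x) = \<bar>x\<bar>" using x by auto
  have "(\<lambda>y. indicator {y. \<bar>x\<bar> \<le> \<bar>y - x\<bar>} y * fk L d s x y) =
        (\<lambda>y. if \<bar>x\<bar> \<le> \<bar>y - x\<bar> then fk L d s x y else 0)"
    by (auto simp: indicator_def)
  thus ?thesis using frac_lap_eq[OF L d s x' x(2)] unfolding m J_def G_def by simp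
qed

lemma G_bound:
  assumes L: "L > 0" and d: "d > 0" and s: "s > 0" "s < 1" and x: "-d/2 < x" "x < 0"
  defines "\<eta> \<equiv> min (d/2) (L*d)"
  defines "h \<equiv> (\<lambda>t::real. indicator {-\<eta>..\<eta>} t * \<bar>t\<bar> powr (-s))"
  defines "k \<equiv> (\<lambda>t::real. indicator {t. \<eta> \<le> \<bar>t\<bar>} t * \<bar>t\<bar> powr (-(1+2 * s)))"
  shows "\<bar>G L d s x\<bar> \<le> 2 * ((L+1) * \<bar>x\<bar> powr (-s) * (\<integral>t. h t \<partial>lborel) + L*d * (\<integral>t. k t \<partial>lborel))"
proof -
  have \<eta>: "\<eta> > 0" "\<eta> \<le> d/2" "\<eta> \<le> L*d" using L d by (auto simp: \<eta>_def)
  have ih: "integrable lborel h" unfolding h_def using int_abs_powr_near[of "-s" \<eta>] s \<eta> by simp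
  have ik: "integrable lborel k" unfolding k_def using int_abs_powr_far[of "-(1+2 * s)" \<eta>] s \<eta> by simp
  let ?f = "\<lambda>y. if \<bar>x\<bar> \<le> \<bar>y - x\<bar> then fk L d s x y else 0"
  let ?b = "\<lambda>y. (L+1) * \<bar>x\<bar> powr (-s) * h (y - x) + L*d * k (y - x)"
  have xpos: "\<bar>x\<bar> > 0" using x by simp
  have if_: "integrable lborel ?f"
  proof -
    have "(\<lambda>y. indicator {y. \<bar>x\<bar> \<le> \<bar>y - x\<bar>} y * fk L d s x y) = ?f"
      by (auto simp: indicator_def)
    with J_integrable[OF L d s(1) xpos, of x] show ?thesis by simp
  qed
  have ib: "integrable lborel ?b"
    using int_translate(1)[OF ih, of x] int_translate(1)[OF ik, of x] by simp
  have bnd: "\<bar>?f y\<bar> \<le> ?b y" for y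
  proof -
    have h0: "0 \<le> h t" "0 \<le> k t" for t by (auto simp: h_def k_def indicator_def)
    have b0: "0 \<le> (L+1) * \<bar>x\<bar> powr (-s) * h (y - x)" "0 \<le> L*d * k (y-x)"
      using h0 L d by auto
    show ?thesis
    proof (cases "\<bar>x\<bar> \<le> \<bar>y - x\<bar>")
      case False then show ?thesis using b0 by simp
    next
      case True
      have tpos: "\<bar>y - x\<bar> > 0" using True xpos by linarith
      have fk_eq: "\<bar>fk L d s x y\<bar> = \<bar>ubar L d x - ubar L d y\<bar> * \<bar>y - x\<bar> powr (-(1+2 * s))"
      proof -
        have e: "\<bar>y - x\<bar> powr (-(1+2 * s)) = inverse (\<bar>x - y\<bar> powr (1 + 2 * s))"
          by (simp only: powr_minus abs_minus_commute)
        show ?thesis unfolding fk_def e by (simp add: divide_inverse abs_mult)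
      qed
      show ?thesis
      proof (cases "\<bar>y - x\<bar> \<le> \<eta>")
        case True2: True
        have y: "-d < y" "y \<le> L*d" using True2 \<eta> x by auto
        have lip: "\<bar>ubar L d x - ubar L d y\<bar> \<le> (L+1) * \<bar>y - x\<bar>"
          using ubar_lip[OF L d _ _ y, of x] x d by (simp add: abs_minus_commute)
        have c1: "\<bar>fk L d s x y\<bar> \<le> (L+1) * (\<bar>y - x\<bar> * \<bar>y - x\<bar> powr (-(1+2 * s)))"
          unfolding fk_eq mult.assoc[symmetric] by (intro mult_right_mono lip) simp
        have c2: "\<bar>y - x\<bar> * \<bar>y - x\<bar> powr (-(1+2 * s)) = \<bar>y - x\<bar> powr (-s) * \<bar>y - x\<bar> powr (-s)"
          using tpos by (simp add: powr_add[symmetric] powr_mult_base)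
        have c3: "\<bar>y - x\<bar> powr (-s) \<le> \<bar>x\<bar> powr (-s)"
          using powr_mono2'[of "-s" "\<bar>x\<bar>" "\<bar>y - x\<bar>"] s xpos True by simp
        have hy: "h (y - x) = \<bar>y - x\<bar> powr (-s)" using True2 unfolding h_def by (simp add: indicator_def abs_le_iff)
        have c4: "\<bar>y - x\<bar> powr (-s) * \<bar>y - x\<bar> powr (-s) \<le> \<bar>x\<bar> powr (-s) * h (y - x)"
          unfolding hy by (intro mult_right_mono c3) simp
        have "\<bar>fk L d s x y\<bar> \<le> (L+1) * (\<bar>x\<bar> powr (-s) * h (y - x))"
        proof -
          have "(L+1) * (\<bar>y - x\<bar> powr (-s) * \<bar>y - x\<bar> powr (-s)) \<le> (L+1) * (\<bar>x\<bar> powr (-s) * h (y - x))"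
            by (rule mult_left_mono[OF c4]) (use L in simp)
          thus ?thesis using c1 unfolding c2 by linarith
        qed
        hence "\<bar>fk L d s x y\<bar> \<le> (L+1) * \<bar>x\<bar> powr (-s) * h (y - x)" by (simp add: mult.assoc)
        then show ?thesis using True b0 by simp
      next
        case False2: False
        have du: "\<bar>ubar L d x - ubar L d y\<bar> \<le> L*d"
          using ubar_range[OF L d, of x] ubar_range[OF L d, of y] by linarith
        have "\<bar>fk L d s x y\<bar> \<le> L*d * \<bar>y - x\<bar> powr (-(1+2 * s))"
          unfolding fk_eq by (intro mult_right_mono du) simp
        also have "\<dots> = L*d * k (y - x)" using False2 by (simp add: k_def indicator_def)
        finally show ?thesis using True b0 by simp
      qed
    qed
  qed
  have "\<bar>\<integral>y. ?f y \<partial>lborel\<bar> \<le> (\<integral>y. ?b y \<partial>lborel)"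
    by (rule integral_abs_bound_integral[OF if_ ib bnd])
  also have "(\<integral>y. ?b y \<partial>lborel) = (L+1) * \<bar>x\<bar> powr (-s) * (\<integral>t. h t \<partial>lborel) + L*d * (\<integral>t. k t \<partial>lborel)"
    using int_translate[OF ih, of x] int_translate[OF ik, of x] by simp
  finally show ?thesis unfolding G_def by simp
qed

lemma G_int:
  assumes L: "L > 0" and d: "d > 0" and s: "s > 0" "s < 1"
  shows "set_integrable lborel {-d/2..0} (G L d s)"
proof -
  define \<eta> where "\<eta> = min (d/2) (L*d)"
  define h where "h = (\<lambda>t::real. indicator {-\<eta>..\<eta>} t * \<bar>t\<bar> powr (-s))"
  define k where "k = (\<lambda>t::real. indicator {t. \<eta> \<le> \<bar>t\<bar>} t * \<bar>t\<bar> powr (-(1+2 * s)))"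
  define C1 where "C1 = 2 * ((L+1) * (\<integral>t. h t \<partial>lborel))"
  define C2 where "C2 = 2 * (L*d * (\<integral>t. k t \<partial>lborel))"
  let ?B = "\<lambda>x::real. C1 * \<bar>x\<bar> powr (-s) + C2"
  define c where "c = d/2"
  have c: "c \<ge> 0" using d by (simp add: c_def)
  have i1: "integrable lborel (\<lambda>x. indicator {-c..c} x * \<bar>x\<bar> powr (-s))"
    using int_abs_powr_near[of "-s" c] s c by simp
  have i2: "integrable lborel (\<lambda>x. indicator {-c..c} x :: real)"
    by (rule integrable_real_indicator) (use c in \<open>auto simp: emeasure_lborel_Icc\<close>)
  have "integrable lborel (\<lambda>x. C1 * (indicator {-c..c} x * \<bar>x\<bar> powr (-s)) + C2 * indicator {-c..c} x)"
    using i1 i2 by (intro Bochner_Integration.integrable_add integrable_mult_right)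
  moreover have "(\<lambda>x. C1 * (indicator {-c..c} x * \<bar>x\<bar> powr (-s)) + C2 * indicator {-c..c} x)
     = (\<lambda>x. indicator {-c..c} x *\<^sub>R ?B x)"
    by (auto simp: fun_eq_iff indicator_def)
  ultimately have "set_integrable lborel {-c..c} ?B" by (simp add: set_integrable_def)
  hence sB: "set_integrable lborel {-d/2..0} ?B"
    by (rule set_integrable_subset) (auto simp: c_def)
  show ?thesis
  proof (rule set_integrable_bound[OF sB])
    show "set_borel_measurable lborel {-d/2..0} (G L d s)"
      unfolding set_borel_measurable_def using G_measurable[of L d s] by measurable
    have a1: "AE x in lborel. x \<noteq> 0" by (rule AE_lborel_singleton)
    have a2: "AE x in lborel. x \<noteq> -d/2" by (rule AE_lborel_singleton)
    show "AE x in lborel. x \<in> {-d/2..0} \<longrightarrow> norm (G L d s x) \<le> norm (?B x)"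
      using a1 a2
    proof eventually_elim
      case (elim x)
      show ?case
      proof
        assume "x \<in> {-d/2..0}"
        hence x: "-d/2 < x" "x < 0" using elim by auto
        have "\<bar>G L d s x\<bar> \<le> ?B x"
          using G_bound[OF L d s x] unfolding C1_def C2_def h_def k_def \<eta>_def
          by (simp add: algebra_simps)
        thus "norm (G L d s x) \<le> norm (?B x)" by simp
      qed
    qed
  qed
qed

theorem lemma1p2:
  fixes \<Lambda> \<delta> s :: real
  assumes "\<Lambda> > 0" and "\<delta> > 0" and "0 < s" and "s < 1"
  shows "(\<forall>x \<in> {-\<delta><..<0}. (\<exists>L. (frac_lap_trunc s (ubar \<Lambda> \<delta>) x \<longlongrightarrow> L) (at_right 0)))
         \<and> ((\<lambda>x. frac_lap s (ubar \<Lambda> \<delta>) x) has_integral 0) {-\<delta>..0}"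
proof
  note L = assms(1) and d = assms(2) and s = assms(3) and s1 = assms(4)
  show "\<forall>x \<in> {-\<delta><..<0}. (\<exists>L. (frac_lap_trunc s (ubar \<Lambda> \<delta>) x \<longlongrightarrow> L) (at_right 0))"
  proof
    fix x assume "x \<in> {-\<delta><..<0}"
    hence x: "-\<delta> < x" "x < 0" by auto
    show "\<exists>L. (frac_lap_trunc s (ubar \<Lambda> \<delta>) x \<longlongrightarrow> L) (at_right 0)"
      using trunc_tendsto[OF L d s x] by blast
  qed
  let ?\<phi> = "\<lambda>x. frac_lap s (ubar \<Lambda> \<delta>) x"
  have "G \<Lambda> \<delta> s integrable_on {-\<delta>/2..0}"
    using set_borel_integral_eq_integral(1)[OF G_int[OF L d s s1]] .
  then obtain I where hG: "(G \<Lambda> \<delta> s has_integral I) {-\<delta>/2..0}" by (auto simp: integrable_on_def)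
  have hI: "(?\<phi> has_integral I) {-\<delta>/2..0}"
  proof (rule has_integral_spike_finite[OF _ _ hG])
    show "finite {-\<delta>/2, 0::real}" by simp
    fix x assume "x \<in> {-\<delta>/2..0} - {-\<delta>/2, 0}"
    hence x: "-\<delta>/2 < x" "x < 0" by auto
    show "?\<phi> x = G \<Lambda> \<delta> s x" by (rule frac_lap_G[OF L d s x])
  qed
  have "((\<lambda>x. ?\<phi> (1 *\<^sub>R x + -\<delta>)) has_integral (I /\<^sub>R 1 ^ DIM(real)))
          (cbox ((-\<delta>/2 - -\<delta>) /\<^sub>R 1) ((0 - -\<delta>) /\<^sub>R 1))"
    by (rule has_integral_affinity') (use hI in \<open>simp_all\<close>)
  hence h1: "((\<lambda>x. ?\<phi> (x - \<delta>)) has_integral I) {\<delta>/2..\<delta>}" by simp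
  have h2: "((\<lambda>x. ?\<phi> (-x - \<delta>)) has_integral I) {-\<delta>..-(\<delta>/2)}"
    using has_integral_reflect_real[of "\<lambda>x. ?\<phi> (x - \<delta>)" I \<delta> "\<delta>/2"] h1 by simp
  have h3: "(?\<phi> has_integral -I) {-\<delta>..-(\<delta>/2)}"
  proof (rule has_integral_spike_finite[OF _ _ has_integral_neg[OF h2]])
    show "finite {-\<delta>, -\<delta>/2}" by simp
    fix x assume "x \<in> {-\<delta>..-(\<delta>/2)} - {-\<delta>, -\<delta>/2}"
    hence x: "-\<delta> < x" "x < 0" using d by auto
    show "?\<phi> x = - ?\<phi> (-x - \<delta>)"
    proof -
      have e: "-x - \<delta> = -\<delta> - x" by simp
      show ?thesis unfolding e using frac_lap_odd[OF L d s x] by linarith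
    qed
  qed
  have "(?\<phi> has_integral (-I + I)) {-\<delta>..0}"
  proof (rule has_integral_combine[OF _ _ h3])
    show "(?\<phi> has_integral I) {-(\<delta>/2)..0}" using hI by simp
  qed (use d in auto)
  thus "(?\<phi> has_integral 0) {-\<delta>..0}" by simp
qed

end
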